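(* For every sequent $\Gamma\Rightarrow\Delta$ of $\mathtt{TPDL}$: if $\Gamma\Rightarrow\Delta$ is provable in the cyclic proof system $\mathtt{CGTPDL}$, then $M\models\Gamma\Rightarrow\Delta$ for every model $M$.
   Context: Fix sets $\mathsf{Prop}$ and $\mathsf{AtProg}$. $\mathtt{TPDL}$ formulas/programs: $\varphi ::= \bot \mid p \mid (\varphi\to\varphi) \mid [\pi]\varphi \mid [\pi]^{\leftarrow}\varphi$, $\pi ::= \alpha \mid \pi;\pi \mid \pi\cup\pi \mid \pi^{*} \mid \varphi?$. For a set $\Gamma$, $[\pi]\Gamma=\{[\pi]\varphi:\varphi\in\Gamma\}$, similarly $[\pi]^{\leftarrow}\Gamma$. A model is $M=(W,(R_\alpha),V)$, $W\neq\emptyset$, $R_\alpha\subseteq W\times W$, $V:W\to\mathcal P(\mathsf{Prop})$; $R_{\pi_0;\pi_1}$ composition, $R_{\pi_0\cup\pi_1}$ union, $R_{\pi^*}$ reflexive–transitive closure, $R_{\psi?}=\{(w,w):M,w\models\psi\}$; $M,w\not\models\bot$, $M,w\models p$ iff $p\in V(w)$, $\to$ classical, $M,w\models[\pi]\varphi$ iff $\varphi$ holds at all $v$ with $wR_\pi v$, $M,w\models[\pi]^{\leftarrow}\varphi$ iff $\varphi$ holds at all $v$ with $vR_\pi w$. A sequent $\Gamma\Rightarrow\Delta$ is a pair of finite sets of formulas; $M\models\Gamma\Rightarrow\Delta$ means at every state where all of $\Gamma$ hold some formula of $\Delta$ holds. Rules of $\mathtt{CGTPDL}$ (premises / conclusion):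 (Ax) / $\Gamma\Rightarrow\Delta$ with $\Gamma\cap\Delta\neq\emptyset$; ($\bot$) / $\Gamma,\bot\Rightarrow\Delta$; ($\to$L) $\Gamma\Rightarrow\varphi,\Delta$ and $\Gamma,\psi\Rightarrow\Delta$ / $\Gamma,\varphi\to\psi\Rightarrow\Delta$; ($\to$R) $\Gamma,\varphi\Rightarrow\psi,\Delta$ / $\Gamma\Rightarrow\varphi\to\psi,\Delta$; (Wk) $\Gamma\Rightarrow\Delta$ / $\Gamma'\Rightarrow\Delta'$ with $\Gamma\subseteq\Gamma',\Delta\subseteq\Delta'$; (Cut) $\Gamma\Rightarrow\varphi,\Delta$ and $\Gamma,\varphi\Rightarrow\Delta$ / $\Gamma\Rightarrow\Delta$; ($[\,]$) $\Gamma\Rightarrow\varphi,[\pi]^{\leftarrow}\Delta$ / $[\pi]\Gamma\Rightarrow[\pi]\varphi,\Delta$; ($[\,]^{\leftarrow}$) $\Gamma\Rightarrow\varphi,[\pi]\Delta$ / $[\pi]^{\leftarrow}\Gamma\Rightarrow[\pi]^{\leftarrow}\varphi,\Delta$; ($[;]$L) $\Gamma,[\pi_0][\pi_1]\varphi\Rightarrow\Delta$ / $\Gamma,[\pi_0;\pi_1]\varphi\Rightarrow\Delta$; ($[;]$R) $\Gamma\Rightarrow[\pi_0][\pi_1]\varphi,\Delta$ / $\Gamma\Rightarrow[\pi_0;\pi_1]\varphi,\Delta$; ($[\cup]$L) $\Gamma,[\pi_0]\varphi,[\pi_1]\varphi\Rightarrow\Delta$ / $\Gamma,[\pi_0\cup\pi_1]\varphi\Rightarrow\Delta$;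 ($[\cup]$R) $\Gamma\Rightarrow\Delta,[\pi_0]\varphi$ and $\Gamma\Rightarrow\Delta,[\pi_1]\varphi$ / $\Gamma\Rightarrow[\pi_0\cup\pi_1]\varphi,\Delta$; ($[*]$L) $\Gamma,\varphi,[\pi][\pi^*]\varphi\Rightarrow\Delta$ / $\Gamma,[\pi^*]\varphi\Rightarrow\Delta$; ($[?]$L) $\Gamma\Rightarrow\varphi,\Delta$ and $\Gamma,\psi\Rightarrow\Delta$ / $\Gamma,[\varphi?]\psi\Rightarrow\Delta$; ($[?]$R) $\Gamma,\varphi\Rightarrow\psi,\Delta$ / $\Gamma\Rightarrow[\varphi?]\psi,\Delta$; (C-s) $\Gamma\Rightarrow\varphi,\Delta$ and $\Gamma\Rightarrow[\pi][\pi^*]\varphi,\Delta$ / $\Gamma\Rightarrow[\pi^*]\varphi,\Delta$. The principal formula of a rule instance is the distinguished formula introduced in its conclusion. A pre-proof is a pair $(\mathcal D,\mathcal C)$: $\mathcal D$ is a finite tree of sequents in which each inner node with its children is an instance of a rule (conclusion/premises), and each leaf is either an instance of Ax or $\bot$ or a bud; $\mathcal C$ maps each bud to a companion, an inner node labelled by the same sequent. The derivation graph is obtained from $\mathcal D$ by identifying each bud with its companion. A path is a (finite or infinite) sequence of nodes $(\Gamma_i\Rightarrow\Delta_i)_i$ of this graph with each $\Gamma_{i+1}\Rightarrow\Delta_{i+1}$ a premise of the rule instance concluding $\Gamma_i\Rightarrow\Delta_i$. A trace following a path is a sequence of formulas $(\tau_i)$ with $\tau_i\in\Delta_i$ for all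 $i$ such that: if node $i$ concludes ($\to$R) with principal $\varphi\to\psi$, then either $\tau_i=\varphi\to\psi$ and $\tau_{i+1}=\psi$, or $\tau_{i+1}=\tau_i$; if it concludes ($[\,]$) with principal $[\pi]\varphi$ then $\tau_i=[\pi]\varphi$ and $\tau_{i+1}=\varphi$; if ($[\,]^{\leftarrow}$) with principal $[\pi]^{\leftarrow}\varphi$ then $\tau_i=[\pi]^{\leftarrow}\varphi$ and $\tau_{i+1}=\varphi$; if ($[;]$R) with principal $[\pi_0;\pi_1]\varphi$, either $\tau_i$ is it and $\tau_{i+1}=[\pi_0][\pi_1]\varphi$, or $\tau_{i+1}=\tau_i$; if ($[\cup]$R) with principal $[\pi_0\cup\pi_1]\varphi$ and the next node is the premise containing $[\pi_j]\varphi$, either $\tau_i$ is the principal formula and $\tau_{i+1}=[\pi_j]\varphi$, or $\tau_{i+1}=\tau_i$; if ($[?]$R) with principal $[\varphi?]\psi$, either $\tau_i$ is it and $\tau_{i+1}=\psi$, or $\tau_{i+1}=\tau_i$; if (C-s) with principal $[\pi^*]\varphi$ and next node the premise with $\varphi$, either $\tau_i=[\pi^*]\varphi$ and $\tau_{i+1}=\varphi$, or $\tau_{i+1}=\tau_i$; if (C-s) with next node the premise with $[\pi][\pi^*]\varphi$, either $\tau_i=[\pi^*]\varphi$ and $\tau_{i+1}=[\pi][\pi^*]\varphi$ (then $i$ is a progress point), or $\tau_{i+1}=\tau_i$; for every other rule, $\tau_{i+1}=\tau_i$. A trace is infinitely progressing if it has infinitely many progress points. The derivation graph satisfies the global trace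 condition if for every infinite path $(\Gamma_i\Rightarrow\Delta_i)_{i\ge0}$ there is $k$ and an infinitely progressing trace following $(\Gamma_i\Rightarrow\Delta_i)_{i\ge k}$. A $\mathtt{CGTPDL}$ proof of a sequent is a pre-proof with that sequent at the root whose derivation graph satisfies the global trace condition; the sequent is then provable in $\mathtt{CGTPDL}$. *)

theory Defs
  imports Main
begin

datatype ('p,'a) fm =
    Bot
  | Atom 'p
  | Imp "('p,'a) fm" "('p,'a) fm"
  | Box "('p,'a) pg" "('p,'a) fm"
  | BoxC "('p,'a) pg" "('p,'a) fm"
and ('p,'a) pg =
    At 'a
  | Seq "('p,'a) pg" "('p,'a) pg"
  | Ch "('p,'a) pg" "('p,'a) pg"
  | Star "('p,'a) pg"
  | Test "('p,'a) fm"

text \<open>A model with state set W = UNIV of type 'w (non-empty), relations for atomic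
  programs and a valuation.\<close>
type_synonym ('a,'p,'w) model = "('a \<Rightarrow> 'w rel) \<times> ('w \<Rightarrow> 'p set)"

primrec sat :: "('a,'p,'w) model \<Rightarrow> 'w \<Rightarrow> ('p,'a) fm \<Rightarrow> bool"
  and rel :: "('a,'p,'w) model \<Rightarrow> ('p,'a) pg \<Rightarrow> 'w rel" where
  "sat M w Bot = False"
| "sat M w (Atom p) = (p \<in> snd M w)"
| "sat M w (Imp \<phi> \<psi>) = (sat M w \<phi> \<longrightarrow> sat M w \<psi>)"
| "sat M w (Box \<pi> \<phi>) = (\<forall>v. (w,v) \<in> rel M \<pi> \<longrightarrow> sat M v \<phi>)"
| "sat M w (BoxC \<pi> \<phi>) = (\<forall>v. (v,w) \<in> rel M \<pi> \<longrightarrow> sat M v \<phi>)"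
| "rel M (At a) = fst M a"
| "rel M (Seq \<pi>0 \<pi>1) = rel M \<pi>0 O rel M \<pi>1"
| "rel M (Ch \<pi>0 \<pi>1) = rel M \<pi>0 \<union> rel M \<pi>1"
| "rel M (Star \<pi>) = (rel M \<pi>)\<^sup>*"
| "rel M (Test \<phi>) = {(w,w) | w. sat M w \<phi>}"

type_synonym ('p,'a) seq = "('p,'a) fm set \<times> ('p,'a) fm set"

definition valid_seq :: "('a,'p,'w) model \<Rightarrow> ('p,'a) seq \<Rightarrow> bool" where
  "valid_seq M S = (\<forall>w. (\<forall>\<phi>\<in>fst S. sat M w \<phi>) \<longrightarrow> (\<exists>\<psi>\<in>snd S. sat M w \<psi>))"

text \<open>Rule labels, recording the data of the principal formula where traces need it.\<close>
datatype ('p,'a) rule =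
    RAx | RBot | RImpL | RImpR "('p,'a) fm" "('p,'a) fm" | RWk | RCut
  | RBox "('p,'a) pg" "('p,'a) fm" | RBoxC "('p,'a) pg" "('p,'a) fm"
  | RSeqL | RSeqR "('p,'a) pg" "('p,'a) pg" "('p,'a) fm"
  | RChL | RChR "('p,'a) pg" "('p,'a) pg" "('p,'a) fm"
  | RStarL | RTestL | RTestR "('p,'a) fm" "('p,'a) fm"
  | RCs "('p,'a) pg" "('p,'a) fm"

fun rule_inst :: "('p,'a) rule \<Rightarrow> ('p,'a) seq list \<Rightarrow> ('p,'a) seq \<Rightarrow> bool" where
  "rule_inst RAx ps c = (ps = [] \<and> fst c \<inter> snd c \<noteq> {})"
| "rule_inst RBot ps c = (ps = [] \<and> (\<exists>\<Gamma>. fst c = insert Bot \<Gamma>))"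
| "rule_inst RImpL ps c = (\<exists>\<Gamma> \<Delta> \<phi> \<psi>. c = (insert (Imp \<phi> \<psi>) \<Gamma>, \<Delta>) \<and>
      ps = [(\<Gamma>, insert \<phi> \<Delta>), (insert \<psi> \<Gamma>, \<Delta>)])"
| "rule_inst (RImpR \<phi> \<psi>) ps c = (\<exists>\<Gamma> \<Delta>. c = (\<Gamma>, insert (Imp \<phi> \<psi>) \<Delta>) \<and>
      ps = [(insert \<phi> \<Gamma>, insert \<psi> \<Delta>)])"
| "rule_inst RWk ps c = (\<exists>\<Gamma> \<Delta>. ps = [(\<Gamma>, \<Delta>)] \<and> \<Gamma> \<subseteq> fst c \<and> \<Delta> \<subseteq> snd c)"
| "rule_inst RCut ps c = (\<exists>\<phi>. ps = [(fst c, insert \<phi> (snd c)), (insert \<phi> (fst c), snd c)])"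
| "rule_inst (RBox \<pi> \<phi>) ps c = (\<exists>\<Gamma> \<Delta>. c = (Box \<pi> ` \<Gamma>, insert (Box \<pi> \<phi>) \<Delta>) \<and>
      ps = [(\<Gamma>, insert \<phi> (BoxC \<pi> ` \<Delta>))])"
| "rule_inst (RBoxC \<pi> \<phi>) ps c = (\<exists>\<Gamma> \<Delta>. c = (BoxC \<pi> ` \<Gamma>, insert (BoxC \<pi> \<phi>) \<Delta>) \<and>
      ps = [(\<Gamma>, insert \<phi> (Box \<pi> ` \<Delta>))])"
| "rule_inst RSeqL ps c = (\<exists>\<Gamma> \<Delta> \<pi>0 \<pi>1 \<phi>. c = (insert (Box (Seq \<pi>0 \<pi>1) \<phi>) \<Gamma>, \<Delta>) \<and>
      ps = [(insert (Box \<pi>0 (Box \<pi>1 \<phi>)) \<Gamma>, \<Delta>)])"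
| "rule_inst (RSeqR \<pi>0 \<pi>1 \<phi>) ps c = (\<exists>\<Gamma> \<Delta>. c = (\<Gamma>, insert (Box (Seq \<pi>0 \<pi>1) \<phi>) \<Delta>) \<and>
      ps = [(\<Gamma>, insert (Box \<pi>0 (Box \<pi>1 \<phi>)) \<Delta>)])"
| "rule_inst RChL ps c = (\<exists>\<Gamma> \<Delta> \<pi>0 \<pi>1 \<phi>. c = (insert (Box (Ch \<pi>0 \<pi>1) \<phi>) \<Gamma>, \<Delta>) \<and>
      ps = [(insert (Box \<pi>0 \<phi>) (insert (Box \<pi>1 \<phi>) \<Gamma>), \<Delta>)])"
| "rule_inst (RChR \<pi>0 \<pi>1 \<phi>) ps c = (\<exists>\<Gamma> \<Delta>. c = (\<Gamma>, insert (Box (Ch \<pi>0 \<pi>1) \<phi>) \<Delta>) \<and>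
      ps = [(\<Gamma>, insert (Box \<pi>0 \<phi>) \<Delta>), (\<Gamma>, insert (Box \<pi>1 \<phi>) \<Delta>)])"
| "rule_inst RStarL ps c = (\<exists>\<Gamma> \<Delta> \<pi> \<phi>. c = (insert (Box (Star \<pi>) \<phi>) \<Gamma>, \<Delta>) \<and>
      ps = [(insert \<phi> (insert (Box \<pi> (Box (Star \<pi>) \<phi>)) \<Gamma>), \<Delta>)])"
| "rule_inst RTestL ps c = (\<exists>\<Gamma> \<Delta> \<phi> \<psi>. c = (insert (Box (Test \<phi>) \<psi>) \<Gamma>, \<Delta>) \<and>
      ps = [(\<Gamma>, insert \<phi> \<Delta>), (insert \<psi> \<Gamma>, \<Delta>)])"
| "rule_inst (RTestR \<phi> \<psi>) ps c = (\<exists>\<Gamma> \<Delta>. c = (\<Gamma>, insert (Box (Test \<phi>) \<psi>) \<Delta>) \<and>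
      ps = [(insert \<phi> \<Gamma>, insert \<psi> \<Delta>)])"
| "rule_inst (RCs \<pi> \<phi>) ps c = (\<exists>\<Gamma> \<Delta>. c = (\<Gamma>, insert (Box (Star \<pi>) \<phi>) \<Delta>) \<and>
      ps = [(\<Gamma>, insert \<phi> \<Delta>), (\<Gamma>, insert (Box \<pi> (Box (Star \<pi>) \<phi>)) \<Delta>)])"

text \<open>Trace condition: going from the conclusion of rule r to its j-th premise (0-based),
  trace formula tau in the conclusion may be followed by tau'.\<close>
fun trace_step :: "('p,'a) rule \<Rightarrow> nat \<Rightarrow> ('p,'a) fm \<Rightarrow> ('p,'a) fm \<Rightarrow> bool" where
  "trace_step (RImpR \<phi> \<psi>) j \<tau> \<tau>' = ((\<tau> = Imp \<phi> \<psi> \<and> \<tau>' = \<psi>) \<or> \<tau>' = \<tau>)"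
| "trace_step (RBox \<pi> \<phi>) j \<tau> \<tau>' = (\<tau> = Box \<pi> \<phi> \<and> \<tau>' = \<phi>)"
| "trace_step (RBoxC \<pi> \<phi>) j \<tau> \<tau>' = (\<tau> = BoxC \<pi> \<phi> \<and> \<tau>' = \<phi>)"
| "trace_step (RSeqR \<pi>0 \<pi>1 \<phi>) j \<tau> \<tau>' =
     ((\<tau> = Box (Seq \<pi>0 \<pi>1) \<phi> \<and> \<tau>' = Box \<pi>0 (Box \<pi>1 \<phi>)) \<or> \<tau>' = \<tau>)"
| "trace_step (RChR \<pi>0 \<pi>1 \<phi>) j \<tau> \<tau>' =
     ((\<tau> = Box (Ch \<pi>0 \<pi>1) \<phi> \<and> \<tau>' = Box (if j = 0 then \<pi>0 else \<pi>1) \<phi>) \<or> \<tau>' = \<tau>)"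
| "trace_step (RTestR \<phi> \<psi>) j \<tau> \<tau>' = ((\<tau> = Box (Test \<phi>) \<psi> \<and> \<tau>' = \<psi>) \<or> \<tau>' = \<tau>)"
| "trace_step (RCs \<pi> \<phi>) j \<tau> \<tau>' =
     ((\<tau> = Box (Star \<pi>) \<phi> \<and> \<tau>' = (if j = 0 then \<phi> else Box \<pi> (Box (Star \<pi>) \<phi>))) \<or> \<tau>' = \<tau>)"
| "trace_step _ j \<tau> \<tau>' = (\<tau>' = \<tau>)"

fun progress :: "('p,'a) rule \<Rightarrow> nat \<Rightarrow> ('p,'a) fm \<Rightarrow> ('p,'a) fm \<Rightarrow> bool" where
  "progress (RCs \<pi> \<phi>) j \<tau> \<tau>' =
     (j = 1 \<and> \<tau> = Box (Star \<pi>) \<phi> \<and> \<tau>' = Box \<pi> (Box (Star \<pi>) \<phi>))"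
| "progress _ j \<tau> \<tau>' = False"

text \<open>Finite derivation trees: inner nodes / axiom leaves carry a rule label and the list
  of premise subtrees; buds are leaves without rule. Nodes are addressed by positions
  (nat lists); the companion function C maps bud positions to positions.\<close>
datatype ('p,'a) ptree = PNode "('p,'a) seq" "('p,'a) rule" "('p,'a) ptree list"
  | Bud "('p,'a) seq"

fun seq_of :: "('p,'a) ptree \<Rightarrow> ('p,'a) seq" where
  "seq_of (PNode s r ts) = s"
| "seq_of (Bud s) = s"

fun rule_of :: "('p,'a) ptree \<Rightarrow> ('p,'a) rule" where
  "rule_of (PNode s r ts) = r"
| "rule_of (Bud s) = RAx"  (* never used: path nodes are PNodes *)

definition subtree :: "('p,'a) ptree \<Rightarrow> nat list \<Rightarrow> ('p,'a) ptree option" where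
  "subtree t p = fold (\<lambda>i ot. case ot of
       Some (PNode s r ts) \<Rightarrow> (if i < length ts then Some (ts ! i) else None)
     | _ \<Rightarrow> None) p (Some t)"

definition is_preproof :: "('p,'a) ptree \<Rightarrow> (nat list \<Rightarrow> nat list) \<Rightarrow> bool" where
  "is_preproof t C =
    ((\<forall>p s r ts. subtree t p = Some (PNode s r ts) \<longrightarrow>
        rule_inst r (map seq_of ts) s \<and> finite (fst s) \<and> finite (snd s)) \<and>
     (\<forall>p s. subtree t p = Some (Bud s) \<longrightarrow>
        (\<exists>r ts. ts \<noteq> [] \<and> subtree t (C p) = Some (PNode s r ts))))"

text \<open>Successor in the derivation graph (buds identified with their companions).\<close>
definition next_node :: "('p,'a) ptree \<Rightarrow> (nat list \<Rightarrow> nat list) \<Rightarrow> nat list \<Rightarrow> nat \<Rightarrow> nat list" where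
  "next_node t C p j = (case subtree t (p @ [j]) of Some (Bud s) \<Rightarrow> C (p @ [j]) | _ \<Rightarrow> p @ [j])"

text \<open>Infinite path: sequence of graph nodes ps with the premise index js i taken at step i.\<close>
definition is_path :: "('p,'a) ptree \<Rightarrow> (nat list \<Rightarrow> nat list) \<Rightarrow> (nat \<Rightarrow> nat list) \<Rightarrow> (nat \<Rightarrow> nat) \<Rightarrow> bool" where
  "is_path t C ps js = (\<forall>i. \<exists>s r ts. subtree t (ps i) = Some (PNode s r ts) \<and>
      js i < length ts \<and> ps (Suc i) = next_node t C (ps i) (js i))"

definition node_seq :: "('p,'a) ptree \<Rightarrow> nat list \<Rightarrow> ('p,'a) seq" where
  "node_seq t p = seq_of (the (subtree t p))"

definition node_rule :: "('p,'a) ptree \<Rightarrow> nat list \<Rightarrow> ('p,'a) rule" where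
  "node_rule t p = rule_of (the (subtree t p))"

definition is_trace :: "('p,'a) ptree \<Rightarrow> (nat \<Rightarrow> nat list) \<Rightarrow> (nat \<Rightarrow> nat) \<Rightarrow> nat \<Rightarrow> (nat \<Rightarrow> ('p,'a) fm) \<Rightarrow> bool" where
  "is_trace t ps js k \<tau> = (\<forall>i\<ge>k. \<tau> i \<in> snd (node_seq t (ps i)) \<and>
      trace_step (node_rule t (ps i)) (js i) (\<tau> i) (\<tau> (Suc i)))"

definition inf_progressing :: "('p,'a) ptree \<Rightarrow> (nat \<Rightarrow> nat list) \<Rightarrow> (nat \<Rightarrow> nat) \<Rightarrow> (nat \<Rightarrow> ('p,'a) fm) \<Rightarrow> bool" where
  "inf_progressing t ps js \<tau> =
     (\<exists>\<^sub>\<infinity>i. progress (node_rule t (ps i)) (js i) (\<tau> i) (\<tau> (Suc i)))"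

definition global_trace_condition :: "('p,'a) ptree \<Rightarrow> (nat list \<Rightarrow> nat list) \<Rightarrow> bool" where
  "global_trace_condition t C = (\<forall>ps js. is_path t C ps js \<longrightarrow>
      (\<exists>k \<tau>. is_trace t ps js k \<tau> \<and> inf_progressing t ps js \<tau>))"

definition is_proof :: "('p,'a) ptree \<Rightarrow> (nat list \<Rightarrow> nat list) \<Rightarrow> ('p,'a) seq \<Rightarrow> bool" where
  "is_proof t C S = (is_preproof t C \<and> seq_of t = S \<and> global_trace_condition t C)"

definition provable :: "('p,'a) seq \<Rightarrow> bool" where
  "provable S = (\<exists>t C. is_proof t C S)"

end

theory Submission
  imports Defs
begin

inductive wk :: "('a,'p,'w) model \<Rightarrow> ('p,'a) pg \<Rightarrow> 'w \<Rightarrow> 'w \<Rightarrow> nat \<Rightarrow> bool" for M where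
  wAt: "(w,v) \<in> fst M a \<Longrightarrow> wk M (At a) w v 0"
| wSeq: "wk M a w u m \<Longrightarrow> wk M b u v n \<Longrightarrow> wk M (Seq a b) w v (m+n)"
| wCh0: "wk M a w v n \<Longrightarrow> wk M (Ch a b) w v n"
| wCh1: "wk M b w v n \<Longrightarrow> wk M (Ch a b) w v n"
| wSt0: "wk M (Star a) w w 0"
| wSt1: "wk M a w u m \<Longrightarrow> wk M (Star a) u v n \<Longrightarrow> wk M (Star a) w v (m+n+1)"
| wTest: "sat M w \<phi> \<Longrightarrow> wk M (Test \<phi>) w w 0"

inductive_cases wkSeqE: "wk M (Seq a b) w v n"
inductive_cases wkChE: "wk M (Ch a b) w v n"
inductive_cases wkStE: "wk M (Star a) w v n"
inductive_cases wkTestE: "wk M (Test \<phi>) w v n"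

lemma wk_rel: "wk M \<pi> w v n \<Longrightarrow> (w,v) \<in> rel M \<pi>"
  by (induction rule: wk.induct) (auto intro: converse_rtrancl_into_rtrancl)

lemma rel_wk_star:
  assumes "(w,v) \<in> (rel M \<pi>)\<^sup>*" and "\<And>w v. (w,v) \<in> rel M \<pi> \<Longrightarrow> \<exists>m. wk M \<pi> w v m"
  shows "\<exists>m. wk M (Star \<pi>) w v m"
  using assms(1)
proof (induction rule: converse_rtrancl_induct)
  case base then show ?case by (blast intro: wSt0)
next
  case (step y z)
  then show ?case using assms(2) by (blast intro: wSt1)
qed

lemma rel_wk: "(w,v) \<in> rel M \<pi> \<Longrightarrow> \<exists>m. wk M \<pi> w v m"
proof (induction \<pi> arbitrary: w v rule: pg.induct[of "\<lambda>_. True"])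
  case (At x) then show ?case by (auto intro: wAt)
next
  case (Seq \<pi>1 \<pi>2) then show ?case by (auto, metis wSeq)
next
  case (Ch \<pi>1 \<pi>2) then show ?case by (auto, (metis wCh0 wCh1)+)
next
  case (Star \<pi>) then show ?case using rel_wk_star[of w v M \<pi>] by auto
next
  case (Test x) then show ?case by (auto intro: wTest)
qed auto

fun bad :: "('a,'p,'w) model \<Rightarrow> ('p,'a) fm \<Rightarrow> 'w \<Rightarrow> nat \<Rightarrow> bool" where
  "bad M Bot w n = (n = 0)"
| "bad M (Atom p) w n = (p \<notin> snd M w \<and> n = 0)"
| "bad M (Imp \<phi> \<psi>) w n = (sat M w \<phi> \<and> bad M \<psi> w n)"
| "bad M (Box \<pi> \<psi>) w n = (\<exists>v m k. wk M \<pi> w v m \<and> bad M \<psi> v k \<and> n = m + k)"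
| "bad M (BoxC \<pi> \<psi>) w n = (\<exists>v. (v,w) \<in> rel M \<pi> \<and> bad M \<psi> v n)"

lemma bad_iff: "(\<exists>n. bad M \<phi> w n) \<longleftrightarrow> \<not> sat M w \<phi>"
proof (induction \<phi> arbitrary: w rule: fm.induct[of _ "\<lambda>_. True"])
  case (Box \<pi> \<psi>)
  show ?case
  proof
    assume "\<exists>n. bad M (Box \<pi> \<psi>) w n"
    then show "\<not> sat M w (Box \<pi> \<psi>)" using Box wk_rel by fastforce
  next
    assume "\<not> sat M w (Box \<pi> \<psi>)"
    then obtain v where "(w,v) \<in> rel M \<pi>" "\<not> sat M v \<psi>" by auto
    then show "\<exists>n. bad M (Box \<pi> \<psi>) w n" using Box rel_wk by fastforce
  qed
next
  case (Imp \<phi> \<psi>) then show ?case by auto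
next
  case (BoxC \<pi> \<psi>)
  have ih: "\<And>v. (\<exists>n. bad M \<psi> v n) = (\<not> sat M v \<psi>)" by (rule BoxC(2))
  show ?case
  proof
    assume "\<exists>n. bad M (BoxC \<pi> \<psi>) w n"
    then obtain n v where v: "(v,w) \<in> rel M \<pi>" "bad M \<psi> v n" by auto
    then have "\<not> sat M v \<psi>" using ih by blast
    then show "\<not> sat M w (BoxC \<pi> \<psi>)" using v by auto
  next
    assume "\<not> sat M w (BoxC \<pi> \<psi>)"
    then obtain v where v: "(v,w) \<in> rel M \<pi>" "\<not> sat M v \<psi>" by auto
    then obtain n where "bad M \<psi> v n" using ih by blast
    then show "\<exists>n. bad M (BoxC \<pi> \<psi>) w n" using v by auto
  qed
qed auto

definition mu :: "('a,'p,'w) model \<Rightarrow> ('p,'a) fm \<Rightarrow> 'w \<Rightarrow> nat" where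
  "mu M \<phi> w = (LEAST n. bad M \<phi> w n)"

lemma mu_bad: "\<not> sat M w \<phi> \<Longrightarrow> bad M \<phi> w (mu M \<phi> w)"
  unfolding mu_def using bad_iff by (metis LeastI_ex)

lemma mu_le: "bad M \<phi> w n \<Longrightarrow> mu M \<phi> w \<le> n"
  unfolding mu_def by (rule Least_le)

definition falsified :: "('a,'p,'w) model \<Rightarrow> ('p,'a) seq \<Rightarrow> 'w \<Rightarrow> bool" where
  "falsified M S w = ((\<forall>\<phi>\<in>fst S. sat M w \<phi>) \<and> (\<forall>\<psi>\<in>snd S. \<not> sat M w \<psi>))"

definition okstep where
  "okstep M r j D w w' = (\<forall>\<tau>\<in>D. \<forall>\<tau>'. trace_step r j \<tau> \<tau>' \<longrightarrow> mu M \<tau>' w' \<le> mu M \<tau> w \<and>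
       (progress r j \<tau> \<tau>' \<longrightarrow> mu M \<tau>' w' < mu M \<tau> w))"

lemma okstep_triv:
  assumes "\<And>\<tau> \<tau>'. trace_step r j \<tau> \<tau>' = (\<tau>' = \<tau>)" "\<And>\<tau> \<tau>'. \<not> progress r j \<tau> \<tau>'"
  shows "okstep M r j D w w"
  using assms unfolding okstep_def by auto

lemma bad_nsat: "bad M \<phi> w n \<Longrightarrow> \<not> sat M w \<phi>"
  using bad_iff[of M \<phi> w] by blast

lemma ex_pick: "j < length ps \<Longrightarrow> falsified M (ps!j) w' \<Longrightarrow> okstep M r j D w w' \<Longrightarrow>
   \<exists>j<length ps. \<exists>w'. falsified M (ps!j) w' \<and> okstep M r j D w w'"
  by (rule exI[of _ j], rule conjI, assumption, rule exI[of _ w'], rule conjI)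

lemma mu_mono:
  assumes "\<not> sat M w A" "\<And>n. bad M A w n \<Longrightarrow> bad M B w' n"
  shows "mu M B w' \<le> mu M A w"
proof -
  have "bad M A w (mu M A w)" by (rule mu_bad[OF assms(1)])
  then have "bad M B w' (mu M A w)" by (rule assms(2))
  then show ?thesis by (rule mu_le)
qed

lemma ok_triv_ex:
  assumes "\<And>\<tau> \<tau>'. trace_step r j \<tau> \<tau>' = (\<tau>' = \<tau>)" "\<And>\<tau> \<tau>'. \<not> progress r j \<tau> \<tau>'"
    "j < length ps" "falsified M (ps!j) w"
  shows "\<exists>j<length ps. \<exists>w'. falsified M (ps!j) w' \<and> okstep M r j D w w'"
proof -
  have "okstep M r j D w w" by (rule okstep_triv[OF assms(1,2)])
  then show ?thesis using assms(3,4) by blast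
qed

lemma local_step:
  assumes ri: "rule_inst r ps s" and fs: "falsified M s w"
  shows "\<exists>j<length ps. \<exists>w'. falsified M (ps!j) w' \<and> okstep M r j (snd s) w w'"
proof (cases r)
  case RAx then show ?thesis using ri fs by (auto simp: falsified_def)
next
  case RBot then show ?thesis using ri fs by (auto simp: falsified_def)
next
  case RImpL
  then obtain \<Gamma> \<Delta> \<phi> \<psi> where s: "s = (insert (Imp \<phi> \<psi>) \<Gamma>, \<Delta>)"
    and ps: "ps = [(\<Gamma>, insert \<phi> \<Delta>), (insert \<psi> \<Gamma>, \<Delta>)]" using ri by auto
  show ?thesis
  proof (cases "sat M w \<phi>")
    case True
    then show ?thesis using fs s ps RImpL by (intro ok_triv_ex[where j=1]) (auto simp: falsified_def)
  next
    case False
    then show ?thesis using fs s ps RImpL by (intro ok_triv_ex[where j=0]) (auto simp: falsified_def)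
  qed
next
  case RWk
  then obtain \<Gamma> \<Delta> where ps: "ps = [(\<Gamma>, \<Delta>)]" "\<Gamma> \<subseteq> fst s" "\<Delta> \<subseteq> snd s" using ri by auto
  then show ?thesis using fs RWk by (intro ok_triv_ex[where j=0]) (auto simp: falsified_def)
next
  case RCut
  then obtain \<phi> where ps: "ps = [(fst s, insert \<phi> (snd s)), (insert \<phi> (fst s), snd s)]" using ri by auto
  show ?thesis
  proof (cases "sat M w \<phi>")
    case True
    then show ?thesis using fs ps RCut by (intro ok_triv_ex[where j=1]) (auto simp: falsified_def)
  next
    case False
    then show ?thesis using fs ps RCut by (intro ok_triv_ex[where j=0]) (auto simp: falsified_def)
  qed
next
  case RSeqL
  then obtain \<Gamma> \<Delta> \<pi>0 \<pi>1 \<phi> where s: "s = (insert (Box (Seq \<pi>0 \<pi>1) \<phi>) \<Gamma>, \<Delta>)"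
    and ps: "ps = [(insert (Box \<pi>0 (Box \<pi>1 \<phi>)) \<Gamma>, \<Delta>)]" using ri by auto
  show ?thesis using fs s ps RSeqL by (intro ok_triv_ex[where j=0]) (auto simp: falsified_def)
next
  case RChL
  then obtain \<Gamma> \<Delta> \<pi>0 \<pi>1 \<phi> where s: "s = (insert (Box (Ch \<pi>0 \<pi>1) \<phi>) \<Gamma>, \<Delta>)"
    and ps: "ps = [(insert (Box \<pi>0 \<phi>) (insert (Box \<pi>1 \<phi>) \<Gamma>), \<Delta>)]" using ri by auto
  show ?thesis using fs s ps RChL by (intro ok_triv_ex[where j=0]) (auto simp: falsified_def)
next
  case RStarL
  then obtain \<Gamma> \<Delta> \<pi> \<phi> where s: "s = (insert (Box (Star \<pi>) \<phi>) \<Gamma>, \<Delta>)"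
    and ps: "ps = [(insert \<phi> (insert (Box \<pi> (Box (Star \<pi>) \<phi>)) \<Gamma>), \<Delta>)]" using ri by auto
  show ?thesis using fs s ps RStarL
    by (intro ok_triv_ex[where j=0]) (auto simp: falsified_def intro: converse_rtrancl_into_rtrancl)
next
  case RTestL
  then obtain \<Gamma> \<Delta> \<phi> \<psi> where s: "s = (insert (Box (Test \<phi>) \<psi>) \<Gamma>, \<Delta>)"
    and ps: "ps = [(\<Gamma>, insert \<phi> \<Delta>), (insert \<psi> \<Gamma>, \<Delta>)]" using ri by auto
  show ?thesis
  proof (cases "sat M w \<phi>")
    case True
    then show ?thesis using fs s ps RTestL by (intro ok_triv_ex[where j=1]) (auto simp: falsified_def)
  next
    case False
    then show ?thesis using fs s ps RTestL by (intro ok_triv_ex[where j=0]) (auto simp: falsified_def)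
  qed
next
  case (RImpR \<phi> \<psi>)
  then obtain \<Gamma> \<Delta> where s: "s = (\<Gamma>, insert (Imp \<phi> \<psi>) \<Delta>)"
    and ps: "ps = [(insert \<phi> \<Gamma>, insert \<psi> \<Delta>)]" using ri by auto
  have f: "\<not> sat M w (Imp \<phi> \<psi>)" using fs s by (auto simp: falsified_def)
  have "mu M \<psi> w \<le> mu M (Imp \<phi> \<psi>) w" using f by (rule mu_mono) simp
  then have "okstep M r 0 (snd s) w w" using RImpR by (auto simp: okstep_def)
  moreover have "falsified M (ps!0) w" using fs s ps by (auto simp: falsified_def)
  ultimately show ?thesis by (intro ex_pick[where j=0 and w'=w]) (simp_all add: ps)
next
  case (RTestR \<phi> \<psi>)
  then obtain \<Gamma> \<Delta> where s: "s = (\<Gamma>, insert (Box (Test \<phi>) \<psi>) \<Delta>)"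
    and ps: "ps = [(insert \<phi> \<Gamma>, insert \<psi> \<Delta>)]" using ri by auto
  have f: "\<not> sat M w (Box (Test \<phi>) \<psi>)" using fs s by (auto simp: falsified_def)
  have "mu M \<psi> w \<le> mu M (Box (Test \<phi>) \<psi>) w" using f by (rule mu_mono) (auto elim: wkTestE)
  then have "okstep M r 0 (snd s) w w" using RTestR by (auto simp: okstep_def)
  moreover have "falsified M (ps!0) w" using fs s ps by (auto simp: falsified_def)
  ultimately show ?thesis by (intro ex_pick[where j=0 and w'=w]) (simp_all add: ps)
next
  case (RSeqR \<pi>0 \<pi>1 \<phi>)
  then obtain \<Gamma> \<Delta> where s: "s = (\<Gamma>, insert (Box (Seq \<pi>0 \<pi>1) \<phi>) \<Delta>)"
    and ps: "ps = [(\<Gamma>, insert (Box \<pi>0 (Box \<pi>1 \<phi>)) \<Delta>)]" using ri by auto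
  have f: "\<not> sat M w (Box (Seq \<pi>0 \<pi>1) \<phi>)" using fs s by (auto simp: falsified_def)
  have "mu M (Box \<pi>0 (Box \<pi>1 \<phi>)) w \<le> mu M (Box (Seq \<pi>0 \<pi>1) \<phi>) w"
    using f by (rule mu_mono) (auto elim!: wkSeqE, metis add.assoc)
  then have "okstep M r 0 (snd s) w w" using RSeqR by (auto simp: okstep_def)
  moreover have "falsified M (ps!0) w" using fs s ps by (auto simp: falsified_def)
  ultimately show ?thesis by (intro ex_pick[where j=0 and w'=w]) (simp_all add: ps)
next
  case (RChR \<pi>0 \<pi>1 \<phi>)
  then obtain \<Gamma> \<Delta> where s: "s = (\<Gamma>, insert (Box (Ch \<pi>0 \<pi>1) \<phi>) \<Delta>)"
    and ps: "ps = [(\<Gamma>, insert (Box \<pi>0 \<phi>) \<Delta>), (\<Gamma>, insert (Box \<pi>1 \<phi>) \<Delta>)]" using ri by auto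
  have f: "\<not> sat M w (Box (Ch \<pi>0 \<pi>1) \<phi>)" using fs s by (auto simp: falsified_def)
  define N where "N = mu M (Box (Ch \<pi>0 \<pi>1) \<phi>) w"
  have "bad M (Box (Ch \<pi>0 \<pi>1) \<phi>) w N" unfolding N_def using f by (rule mu_bad)
  then obtain v m k where v: "wk M (Ch \<pi>0 \<pi>1) w v m" "bad M \<phi> v k" "N = m + k" by auto
  from v(1) have "wk M \<pi>0 w v m \<or> wk M \<pi>1 w v m" by (auto elim: wkChE)
  then show ?thesis
  proof
    assume h: "wk M \<pi>0 w v m"
    then have b: "bad M (Box \<pi>0 \<phi>) w N" using h v by auto
    then have "mu M (Box \<pi>0 \<phi>) w \<le> N" by (rule mu_le)
    then have "okstep M r 0 (snd s) w w" using RChR by (auto simp: okstep_def N_def)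
    moreover have "falsified M (ps!0) w" using fs s ps bad_nsat[OF b] by (auto simp: falsified_def)
    ultimately show ?thesis by (intro ex_pick[where j=0 and w'=w]) (simp_all add: ps)
  next
    assume h: "wk M \<pi>1 w v m"
    then have b: "bad M (Box \<pi>1 \<phi>) w N" using h v by auto
    then have "mu M (Box \<pi>1 \<phi>) w \<le> N" by (rule mu_le)
    then have "okstep M r 1 (snd s) w w" using RChR by (auto simp: okstep_def N_def)
    moreover have "falsified M (ps!1) w" using fs s ps bad_nsat[OF b] by (auto simp: falsified_def)
    ultimately show ?thesis by (intro ex_pick[where j=1 and w'=w]) (simp_all add: ps)
  qed
next
  case (RCs \<pi> \<phi>)
  then obtain \<Gamma> \<Delta> where s: "s = (\<Gamma>, insert (Box (Star \<pi>) \<phi>) \<Delta>)"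
    and ps: "ps = [(\<Gamma>, insert \<phi> \<Delta>), (\<Gamma>, insert (Box \<pi> (Box (Star \<pi>) \<phi>)) \<Delta>)]" using ri by auto
  have f: "\<not> sat M w (Box (Star \<pi>) \<phi>)" using fs s by (auto simp: falsified_def)
  define N where "N = mu M (Box (Star \<pi>) \<phi>) w"
  have "bad M (Box (Star \<pi>) \<phi>) w N" unfolding N_def using f by (rule mu_bad)
  then obtain v m k where v: "wk M (Star \<pi>) w v m" "bad M \<phi> v k" "N = m + k" by auto
  from v(1) have "(v = w \<and> m = 0) \<or> (\<exists>u m1 m2. wk M \<pi> w u m1 \<and> wk M (Star \<pi>) u v m2 \<and> m = m1+m2+1)"
    by (auto elim: wkStE)
  then show ?thesis
  proof
    assume h: "v = w \<and> m = 0"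
    then have b: "bad M \<phi> w N" using h v by auto
    then have "mu M \<phi> w \<le> N" by (rule mu_le)
    then have "okstep M r 0 (snd s) w w" using RCs by (auto simp: okstep_def N_def)
    moreover have "falsified M (ps!0) w" using fs s ps bad_nsat[OF b] by (auto simp: falsified_def)
    ultimately show ?thesis by (intro ex_pick[where j=0 and w'=w]) (simp_all add: ps)
  next
    assume "\<exists>u m1 m2. wk M \<pi> w u m1 \<and> wk M (Star \<pi>) u v m2 \<and> m = m1+m2+1"
    then obtain u m1 m2 where h: "wk M \<pi> w u m1" "wk M (Star \<pi>) u v m2" "m = m1+m2+1" by blast
    then have b: "bad M (Box \<pi> (Box (Star \<pi>) \<phi>)) w (m1 + (m2 + k))" using h(1,2) v(2) by fastforce
    then have "mu M (Box \<pi> (Box (Star \<pi>) \<phi>)) w < N" using h v mu_le[OF b] by simp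
    then have "okstep M r 1 (snd s) w w" using RCs by (auto simp: okstep_def N_def)
    moreover have "falsified M (ps!1) w" using fs s ps bad_nsat[OF b] by (auto simp: falsified_def)
    ultimately show ?thesis by (intro ex_pick[where j=1 and w'=w]) (simp_all add: ps)
  qed
next
  case (RBox \<pi> \<phi>)
  then obtain \<Gamma> \<Delta> where s: "s = (Box \<pi> ` \<Gamma>, insert (Box \<pi> \<phi>) \<Delta>)"
    and ps: "ps = [(\<Gamma>, insert \<phi> (BoxC \<pi> ` \<Delta>))]" using ri by auto
  have f: "\<not> sat M w (Box \<pi> \<phi>)" using fs s by (auto simp: falsified_def)
  define N where "N = mu M (Box \<pi> \<phi>) w"
  have "bad M (Box \<pi> \<phi>) w N" unfolding N_def using f by (rule mu_bad)
  then obtain v m k where v: "wk M \<pi> w v m" "bad M \<phi> v k" "N = m + k" by auto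
  have wv: "(w,v) \<in> rel M \<pi>" using v(1) by (rule wk_rel)
  have "mu M \<phi> v \<le> N" using mu_le[OF v(2)] v(3) by simp
  then have "okstep M r 0 (snd s) w v" using RBox by (auto simp: okstep_def N_def)
  moreover have "falsified M (ps!0) v" using fs s ps bad_nsat[OF v(2)] wv by (auto simp: falsified_def)
  ultimately show ?thesis by (intro ex_pick[where j=0 and w'=v]) (simp_all add: ps)
next
  case (RBoxC \<pi> \<phi>)
  then obtain \<Gamma> \<Delta> where s: "s = (BoxC \<pi> ` \<Gamma>, insert (BoxC \<pi> \<phi>) \<Delta>)"
    and ps: "ps = [(\<Gamma>, insert \<phi> (Box \<pi> ` \<Delta>))]" using ri by auto
  have f: "\<not> sat M w (BoxC \<pi> \<phi>)" using fs s by (auto simp: falsified_def)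
  define N where "N = mu M (BoxC \<pi> \<phi>) w"
  have "bad M (BoxC \<pi> \<phi>) w N" unfolding N_def using f by (rule mu_bad)
  then obtain v where v: "(v,w) \<in> rel M \<pi>" "bad M \<phi> v N" by auto
  have "mu M \<phi> v \<le> N" using mu_le[OF v(2)] by simp
  then have "okstep M r 0 (snd s) w v" using RBoxC by (auto simp: okstep_def N_def)
  moreover have "falsified M (ps!0) v" using fs s ps bad_nsat[OF v(2)] v(1) by (auto simp: falsified_def)
  ultimately show ?thesis by (intro ex_pick[where j=0 and w'=v]) (simp_all add: ps)
qed


lemma subtree_Nil: "subtree t [] = Some t"
  by (simp add: subtree_def)

lemma subtree_snoc: "subtree t (p @ [j]) = (case subtree t p of
    Some (PNode s r ts) \<Rightarrow> (if j < length ts then Some (ts ! j) else None) | _ \<Rightarrow> None)"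
  by (simp add: subtree_def)

lemma subtree_Bud: "subtree (Bud s) p \<noteq> Some (PNode s' r ts)"
proof (induction p arbitrary: s' r ts rule: rev_induct)
  case Nil then show ?case by (simp add: subtree_Nil)
next
  case (snoc x xs)
  then show ?case
    by (simp add: subtree_snoc split: option.splits ptree.splits)
qed

lemma desc_contra:
  fixes f :: "nat \<Rightarrow> nat"
  assumes mono: "\<And>i. i \<ge> k \<Longrightarrow> f (Suc i) \<le> f i"
    and inf: "\<And>m. \<exists>n\<ge>m. f (Suc n) < f n"
  shows False
proof -
  have chain: "f j \<le> f i" if "k \<le> i" "i \<le> j" for i j
    using that(2)
  proof (induction j rule: dec_induct)
    case base show ?case by simp
  next
    case (step n)
    then show ?case using mono[of n] that(1) by linarith
  qed
  have "\<exists>i\<ge>k. f i + n \<le> f k" for n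
  proof (induction n)
    case 0 show ?case by (rule exI[of _ k]) simp
  next
    case (Suc n)
    then obtain i where i: "i \<ge> k" "f i + n \<le> f k" by blast
    obtain m where m: "m \<ge> i" "f (Suc m) < f m" using inf[of i] by blast
    have "f m \<le> f i" using chain[of i m] i m by simp
    then have "f (Suc m) + Suc n \<le> f k" using m i by linarith
    moreover have "Suc m \<ge> k" using m i by simp
    ultimately show ?case by blast
  qed
  then obtain i where "f i + Suc (f k) \<le> f k" by blast
  then show False by simp
qed

theorem mainTheorem5:
  fixes \<Gamma> \<Delta> :: "('p,'a) fm set"
  assumes "finite \<Gamma>" and "finite \<Delta>" and "provable (\<Gamma>, \<Delta>)"
  shows "\<forall>M :: ('a,'p,'w) model. valid_seq M (\<Gamma>, \<Delta>)"
proof (intro allI, rule ccontr)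
  fix M :: "('a,'p,'w) model"
  assume "\<not> valid_seq M (\<Gamma>, \<Delta>)"
  then obtain w0 where fw0: "falsified M (\<Gamma>, \<Delta>) w0"
    by (auto simp: valid_seq_def falsified_def)
  from assms(3) obtain t C where pp: "is_preproof t C" and root: "seq_of t = (\<Gamma>, \<Delta>)"
    and gtc: "global_trace_condition t C"
    by (auto simp: provable_def is_proof_def)
  have pp1: "\<And>p s r ts. subtree t p = Some (PNode s r ts) \<Longrightarrow> rule_inst r (map seq_of ts) s"
    using pp unfolding is_preproof_def by blast
  have pp2: "\<And>p s. subtree t p = Some (Bud s) \<Longrightarrow> \<exists>r ts. ts \<noteq> [] \<and> subtree t (C p) = Some (PNode s r ts)"
    using pp unfolding is_preproof_def by blast
  define good where "good x = (\<exists>s r ts. subtree t (fst x) = Some (PNode s r ts) \<and> falsified M s (snd x))"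
    for x :: "nat list \<times> 'w"
  define Q where "Q x y = (\<exists>s r ts. subtree t (fst x) = Some (PNode s r ts) \<and> fst y < length ts \<and>
      fst (snd y) = next_node t C (fst x) (fst y) \<and> okstep M r (fst y) (snd s) (snd x) (snd (snd y)))"
    for x :: "nat list \<times> 'w" and y :: "nat \<times> nat list \<times> 'w"
  have g0: "good ([], w0)"
  proof (cases t)
    case (PNode s r ts)
    then show ?thesis using root fw0 by (simp add: good_def subtree_Nil)
  next
    case (Bud s)
    then have "subtree t [] = Some (Bud s)" by (simp add: subtree_Nil)
    then obtain r ts where "subtree t (C []) = Some (PNode s r ts)" using pp2 by blast
    then show ?thesis using Bud subtree_Bud by metis
  qed
  have step: "\<exists>y. good x \<longrightarrow> good (snd y) \<and> Q x y" for x
  proof (cases "good x")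
    case True
    then obtain s r ts where st: "subtree t (fst x) = Some (PNode s r ts)" and fs: "falsified M s (snd x)"
      by (auto simp: good_def)
    have "rule_inst r (map seq_of ts) s" using pp1[OF st] .
    from local_step[OF this fs] obtain j w' where j: "j < length ts"
      and fj: "falsified M (seq_of (ts ! j)) w'" and ok: "okstep M r j (snd s) (snd x) w'"
      by auto
    have sj: "subtree t (fst x @ [j]) = Some (ts ! j)" using st j by (simp add: subtree_snoc)
    have gn: "good (next_node t C (fst x) j, w')"
    proof (cases "ts ! j")
      case (PNode s' r' ts')
      then show ?thesis using sj fj by (simp add: good_def next_node_def)
    next
      case (Bud s')
      then obtain r' ts' where "subtree t (C (fst x @ [j])) = Some (PNode s' r' ts')"
        using pp2[of "fst x @ [j]" s'] sj Bud by auto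
      then show ?thesis using sj fj Bud by (simp add: good_def next_node_def)
    qed
    show ?thesis
      by (rule exI[of _ "(j, next_node t C (fst x) j, w')"]) (use gn st j ok in \<open>auto simp: Q_def\<close>)
  qed simp
  then obtain F where F: "\<And>x. good x \<Longrightarrow> good (snd (F x)) \<and> Q x (F x)"
    by metis
  define X where "X = rec_nat ([], w0) (\<lambda>_ x. snd (F x))"
  have X0: "X 0 = ([], w0)" and XS: "\<And>i. X (Suc i) = snd (F (X i))" by (simp_all add: X_def)
  have gX: "good (X i)" for i
    by (induction i) (use g0 F in \<open>simp_all add: X0 XS\<close>)
  define ps where "ps i = fst (X i)" for i
  define js where "js i = fst (F (X i))" for i
  define ws where "ws i = snd (X i)" for i
  have QX: "Q (X i) (F (X i))" for i using F gX by blast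
  have path: "is_path t C ps js"
    unfolding is_path_def
  proof
    fix i
    from QX[of i] obtain s r ts where "subtree t (fst (X i)) = Some (PNode s r ts)"
      "fst (F (X i)) < length ts" "fst (snd (F (X i))) = next_node t C (fst (X i)) (fst (F (X i)))"
      by (auto simp: Q_def)
    then show "\<exists>s r ts. subtree t (ps i) = Some (PNode s r ts) \<and> js i < length ts \<and>
        ps (Suc i) = next_node t C (ps i) (js i)"
      by (simp add: ps_def js_def XS)
  qed
  have okX: "okstep M (node_rule t (ps i)) (js i) (snd (node_seq t (ps i))) (ws i) (ws (Suc i))" for i
  proof -
    from QX[of i] obtain s r ts where "subtree t (fst (X i)) = Some (PNode s r ts)"
      "okstep M r (fst (F (X i))) (snd s) (snd (X i)) (snd (snd (F (X i))))"
      by (auto simp: Q_def)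
    then show ?thesis
      by (simp add: ps_def js_def ws_def XS node_rule_def node_seq_def)
  qed
  from gtc path obtain k \<tau> where tr: "is_trace t ps js k \<tau>" and ip: "inf_progressing t ps js \<tau>"
    unfolding global_trace_condition_def by blast
  define f where "f i = mu M (\<tau> i) (ws i)" for i
  have fstep: "f (Suc i) \<le> f i \<and> (progress (node_rule t (ps i)) (js i) (\<tau> i) (\<tau> (Suc i)) \<longrightarrow> f (Suc i) < f i)"
    if "i \<ge> k" for i
  proof -
    have "\<tau> i \<in> snd (node_seq t (ps i))" "trace_step (node_rule t (ps i)) (js i) (\<tau> i) (\<tau> (Suc i))"
      using tr that by (auto simp: is_trace_def)
    then show ?thesis using okX[of i] unfolding okstep_def f_def by blast
  qed
  show False
  proof (rule desc_contra[of k f])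
    show "\<And>i. k \<le> i \<Longrightarrow> f (Suc i) \<le> f i" using fstep by blast
  next
    fix m
    from ip obtain n where "n \<ge> max m k" "progress (node_rule t (ps n)) (js n) (\<tau> n) (\<tau> (Suc n))"
      unfolding inf_progressing_def cofinite_eq_sequentially frequently_sequentially by blast
    then show "\<exists>n\<ge>m. f (Suc n) < f n" using fstep[of n] by auto
  qed
qed

end
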